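(* Let $R$ be a commutative noetherian domain, $\sigma\in\operatorname{Aut}_\Bbbk(R)$, $H,J$ ideals of $R$, and $B=R(t,\sigma,H,J)$. Suppose that $\sigma^n(\mathfrak p)\neq\mathfrak p$ for every maximal ideal $\mathfrak p$ of $R$ and every integer $n\neq0$. Then every two-sided ideal of $B$ is graded (i.e. generated by homogeneous elements for the $\mathbb Z$-grading $B=\bigoplus_n I^{(n)}t^n$).
   Context: $\Bbbk$ is a field; all algebras are associative unital $\Bbbk$-algebras. For an algebra $R$ and $\sigma\in\operatorname{Aut}_\Bbbk(R)$, $R[t,t^{-1};\sigma]$ is the skew Laurent ring: generated over $R$ by $t,t^{-1}$ with $tt^{-1}=t^{-1}t=1$ and $t^{\pm1}r=\sigma^{\pm1}(r)t^{\pm1}$ for $r\in R$. Given two-sided ideals $H,J$ of $R$, set $I^{(0)}=R$, $I^{(n)}=J\sigma(J)\cdots\sigma^{n-1}(J)$ for $n\ge1$, and $I^{(n)}=\sigma^{-1}(H)\sigma^{-2}(H)\cdots\sigma^{n}(H)$ for $n\le-1$; it is assumed throughout that $I^{(n)}\neq0$ for all $n\in\mathbb Z$. The Bell–Rogalski (BR) algebra is $R(t,\sigma,H,J)=\bigoplus_{n\in\mathbb Z}I^{(n)}t^n\subseteq R[t,t^{-1};\sigma]$. *)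

theory Defs
  imports Main
begin

section \<open>Commutative ring notions (R is the whole type 'a)\<close>

definition is_ideal :: "'a::comm_ring_1 set \<Rightarrow> bool" where
  "is_ideal I \<longleftrightarrow> 0 \<in> I \<and> (\<forall>x\<in>I. \<forall>y\<in>I. x + y \<in> I \<and> x - y \<in> I)
      \<and> (\<forall>r x. x \<in> I \<longrightarrow> r * x \<in> I)"

definition maximal_ideal :: "'a::comm_ring_1 set \<Rightarrow> bool" where
  "maximal_ideal P \<longleftrightarrow> is_ideal P \<and> P \<noteq> UNIV \<and>
      (\<forall>Q. is_ideal Q \<and> P \<subseteq> Q \<longrightarrow> Q = P \<or> Q = UNIV)"

definition noetherian :: "'a::comm_ring_1 itself \<Rightarrow> bool" where
  "noetherian _ \<longleftrightarrow> (\<forall>C :: nat \<Rightarrow> 'a set. (\<forall>i. is_ideal (C i)) \<and> (\<forall>i. C i \<subseteq> C (Suc i))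
      \<longrightarrow> (\<exists>N. \<forall>m\<ge>N. C m = C N))"

text \<open>R is a k-algebra via the structure map emb : k -> R (a unital ring homomorphism);
  sigma is a k-algebra automorphism of R.\<close>
definition ring_hom_fun :: "('k::ring_1 \<Rightarrow> 'a::ring_1) \<Rightarrow> bool" where
  "ring_hom_fun f \<longleftrightarrow> f 1 = 1 \<and> (\<forall>x y. f (x + y) = f x + f y) \<and> (\<forall>x y. f (x * y) = f x * f y)"

definition k_alg_aut :: "('k::field \<Rightarrow> 'a::comm_ring_1) \<Rightarrow> ('a \<Rightarrow> 'a) \<Rightarrow> bool" where
  "k_alg_aut emb \<sigma> \<longleftrightarrow> bij \<sigma> \<and> ring_hom_fun \<sigma> \<and> (\<forall>c. \<sigma> (emb c) = emb c)"

definition zpow :: "('a \<Rightarrow> 'a) \<Rightarrow> int \<Rightarrow> 'a \<Rightarrow> 'a" where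
  "zpow \<sigma> n = (if 0 \<le> n then \<sigma> ^^ nat n else inv \<sigma> ^^ nat (- n))"

inductive_set ideal_mult :: "'a::comm_ring_1 set \<Rightarrow> 'a set \<Rightarrow> 'a set" for A B where
  zero: "0 \<in> ideal_mult A B"
| step: "a \<in> A \<Longrightarrow> b \<in> B \<Longrightarrow> x \<in> ideal_mult A B \<Longrightarrow> a * b + x \<in> ideal_mult A B"

fun posI :: "('a::comm_ring_1 \<Rightarrow> 'a) \<Rightarrow> 'a set \<Rightarrow> nat \<Rightarrow> 'a set" where
  "posI \<sigma> J 0 = UNIV"
| "posI \<sigma> J (Suc m) = ideal_mult (posI \<sigma> J m) (zpow \<sigma> (int m) ` J)"

fun negI :: "('a::comm_ring_1 \<Rightarrow> 'a) \<Rightarrow> 'a set \<Rightarrow> nat \<Rightarrow> 'a set" where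
  "negI \<sigma> H 0 = UNIV"
| "negI \<sigma> H (Suc m) = ideal_mult (negI \<sigma> H m) (zpow \<sigma> (- int (Suc m)) ` H)"

definition Iseq :: "('a::comm_ring_1 \<Rightarrow> 'a) \<Rightarrow> 'a set \<Rightarrow> 'a set \<Rightarrow> int \<Rightarrow> 'a set" where
  "Iseq \<sigma> H J n = (if 0 \<le> n then posI \<sigma> J (nat n) else negI \<sigma> H (nat (- n)))"

text \<open>An element sum_n f(n) t^n is represented by its coefficient function f : int -> R
  with finite support.\<close>
definition supp :: "(int \<Rightarrow> 'a::zero) \<Rightarrow> int set" where
  "supp f = {n. f n \<noteq> 0}"

definition skew_laurent :: "(int \<Rightarrow> 'a::comm_ring_1) set" where
  "skew_laurent = {f. finite (supp f)}"

text \<open>(a t^m)(b t^n) = a sigma^m(b) t^(m+n).\<close>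
definition skmult :: "('a::comm_ring_1 \<Rightarrow> 'a) \<Rightarrow> (int \<Rightarrow> 'a) \<Rightarrow> (int \<Rightarrow> 'a) \<Rightarrow> int \<Rightarrow> 'a" where
  "skmult \<sigma> f g = (\<lambda>k. \<Sum>m\<in>supp f. f m * zpow \<sigma> m (g (k - m)))"

definition BR_alg :: "('a::comm_ring_1 \<Rightarrow> 'a) \<Rightarrow> 'a set \<Rightarrow> 'a set \<Rightarrow> (int \<Rightarrow> 'a) set" where
  "BR_alg \<sigma> H J = {f. finite (supp f) \<and> (\<forall>n. f n \<in> Iseq \<sigma> H J n)}"

definition two_sided_ideal :: "('a::comm_ring_1 \<Rightarrow> 'a) \<Rightarrow> (int \<Rightarrow> 'a) set \<Rightarrow> (int \<Rightarrow> 'a) set \<Rightarrow> bool" where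
  "two_sided_ideal \<sigma> B I \<longleftrightarrow> I \<subseteq> B \<and> (\<lambda>_. 0) \<in> I \<and>
     (\<forall>x\<in>I. \<forall>y\<in>I. (\<lambda>n. x n + y n) \<in> I \<and> (\<lambda>n. x n - y n) \<in> I) \<and>
     (\<forall>b\<in>B. \<forall>x\<in>I. skmult \<sigma> b x \<in> I \<and> skmult \<sigma> x b \<in> I)"

definition gen_two_sided_ideal ::
    "('a::comm_ring_1 \<Rightarrow> 'a) \<Rightarrow> (int \<Rightarrow> 'a) set \<Rightarrow> (int \<Rightarrow> 'a) set \<Rightarrow> (int \<Rightarrow> 'a) set" where
  "gen_two_sided_ideal \<sigma> B S = \<Inter>{I. two_sided_ideal \<sigma> B I \<and> S \<subseteq> I}"

definition homogeneous :: "(int \<Rightarrow> 'a::zero) \<Rightarrow> bool" where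
  "homogeneous f \<longleftrightarrow> (\<exists>n. supp f \<subseteq> {n})"

definition graded_ideal :: "('a::comm_ring_1 \<Rightarrow> 'a) \<Rightarrow> (int \<Rightarrow> 'a) set \<Rightarrow> (int \<Rightarrow> 'a) set \<Rightarrow> bool" where
  "graded_ideal \<sigma> B I \<longleftrightarrow> I = gen_two_sided_ideal \<sigma> B {f \<in> I. homogeneous f}"

end

theory Submission
  imports Defs
begin

definition single :: "int \<Rightarrow> 'a::zero \<Rightarrow> int \<Rightarrow> 'a" where
  "single n c = (\<lambda>k. if k = n then c else 0)"

lemma zpow_0: "zpow \<sigma> 0 = id"
  by (simp add: zpow_def)

lemma zpow_succ:
  assumes "bij \<sigma>"
  shows "zpow \<sigma> (n+1) x = \<sigma> (zpow \<sigma> n x)"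
proof (cases "0 \<le> n")
  case True
  then have "nat (n+1) = Suc (nat n)" by simp
  then show ?thesis using True by (simp add: zpow_def)
next
  case False
  then have e: "nat (-n) = Suc (nat (-(n+1)))" by simp
  have z: "zpow \<sigma> (n+1) = inv \<sigma> ^^ nat (-(n+1))"
    using False by (cases "n+1 = 0") (auto simp: zpow_def)
  have "zpow \<sigma> n x = inv \<sigma> ((inv \<sigma> ^^ nat (-(n+1))) x)"
    using False e by (simp add: zpow_def)
  then show ?thesis using z assms
    by (simp add: bij_is_surj surj_f_inv_f)
qed

lemma zpow_pred:
  assumes "bij \<sigma>"
  shows "zpow \<sigma> (n-1) x = inv \<sigma> (zpow \<sigma> n x)"
proof -
  have "zpow \<sigma> n x = \<sigma> (zpow \<sigma> (n-1) x)" using zpow_succ[OF assms, of "n-1"] by simp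
  then show ?thesis using assms by (simp add: bij_is_inj inv_f_f)
qed

lemma zpow_add:
  assumes "bij \<sigma>"
  shows "zpow \<sigma> (m+n) x = zpow \<sigma> m (zpow \<sigma> n x)"
proof (induction m rule: int_induct[where k=0])
  case base
  then show ?case by (simp add: zpow_0)
next
  case (step1 i)
  have "zpow \<sigma> (i+1+n) x = zpow \<sigma> ((i+n)+1) x" by (simp add: algebra_simps)
  also have "\<dots> = \<sigma> (zpow \<sigma> (i+n) x)" by (rule zpow_succ[OF assms])
  also have "\<dots> = zpow \<sigma> (i+1) (zpow \<sigma> n x)" using step1 by (simp add: zpow_succ[OF assms])
  finally show ?case .
next
  case (step2 i)
  have "zpow \<sigma> (i-1+n) x = zpow \<sigma> ((i+n)-1) x" by (simp add: algebra_simps)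
  also have "\<dots> = inv \<sigma> (zpow \<sigma> (i+n) x)" by (rule zpow_pred[OF assms])
  also have "\<dots> = zpow \<sigma> (i-1) (zpow \<sigma> n x)" using step2 by (simp add: zpow_pred[OF assms])
  finally show ?case .
qed

lemma zpow_zero:
  assumes "bij \<sigma>" and s0: "\<sigma> 0 = 0"
  shows "zpow \<sigma> m 0 = 0"
proof (induction m rule: int_induct[where k=0])
  case base
  then show ?case by (simp add: zpow_0)
next
  case (step1 i)
  then show ?case by (simp add: zpow_succ[OF assms(1)] s0)
next
  case (step2 i)
  have "inv \<sigma> 0 = 0" using s0 assms(1) by (metis bij_is_inj inv_f_f)
  then show ?case using step2 by (simp add: zpow_pred[OF assms(1)])
qed

lemma exists_maximal:
  fixes Q :: "'a::comm_ring_1 set"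
  assumes N: "noetherian TYPE('a)" and Q: "is_ideal Q" "Q \<noteq> UNIV"
  shows "\<exists>P. maximal_ideal P \<and> Q \<subseteq> P"
proof (rule ccontr)
  assume nm: "\<not> (\<exists>P. maximal_ideal P \<and> Q \<subseteq> P)"
  define f where "f = (\<lambda>P::'a set. SOME Q'. is_ideal Q' \<and> P \<subseteq> Q' \<and> Q' \<noteq> P \<and> Q' \<noteq> UNIV)"
  have fP: "is_ideal (f P) \<and> P \<subseteq> f P \<and> f P \<noteq> P \<and> f P \<noteq> UNIV"
    if "is_ideal P" "P \<noteq> UNIV" "Q \<subseteq> P" for P
  proof -
    have "\<not> maximal_ideal P" using nm that by blast
    then have "\<exists>Q'. is_ideal Q' \<and> P \<subseteq> Q' \<and> Q' \<noteq> P \<and> Q' \<noteq> UNIV"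
      using that unfolding maximal_ideal_def by blast
    then show ?thesis unfolding f_def by (rule someI_ex)
  qed
  define C where "C = (\<lambda>i. (f ^^ i) Q)"
  have inv: "is_ideal (C i) \<and> C i \<noteq> UNIV \<and> Q \<subseteq> C i" for i
  proof (induction i)
    case 0
    then show ?case using Q by (simp add: C_def)
  next
    case (Suc i)
    have e: "C (Suc i) = f (C i)" by (simp add: C_def)
    have h1: "is_ideal (C i)" and h2: "C i \<noteq> UNIV" and h3: "Q \<subseteq> C i" using Suc by auto
    have "is_ideal (f (C i)) \<and> C i \<subseteq> f (C i) \<and> f (C i) \<noteq> C i \<and> f (C i) \<noteq> UNIV"
      by (rule fP[OF h1 h2 h3])
    then show ?case using e h3 by auto
  qed
  have st: "C i \<subseteq> C (Suc i) \<and> C (Suc i) \<noteq> C i" for i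
  proof -
    have h: "is_ideal (C i)" "C i \<noteq> UNIV" "Q \<subseteq> C i" using inv[of i] by auto
    have "C (Suc i) = f (C i)" by (simp add: C_def)
    then show ?thesis using fP[OF h] by simp
  qed
  have ch: "(\<forall>i. is_ideal (C i)) \<and> (\<forall>i. C i \<subseteq> C (Suc i))" using inv st by simp
  have NN: "\<forall>C :: nat \<Rightarrow> 'a set. (\<forall>i. is_ideal (C i)) \<and> (\<forall>i. C i \<subseteq> C (Suc i))
      \<longrightarrow> (\<exists>N. \<forall>m\<ge>N. C m = C N)" using N unfolding noetherian_def by assumption
  have "\<exists>M. \<forall>m\<ge>M. C m = C M" by (rule mp[OF spec[OF NN, of C] ch])
  then obtain M where "\<forall>m\<ge>M. C m = C M" by (elim exE)
  then have "C (Suc M) = C M" by (rule mp[OF spec[of _ "Suc M"]]) simp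
  then show False using st[of M] by simp
qed

lemma zero_posI: "0 \<in> posI \<sigma> J m"
  by (cases m) (auto intro: ideal_mult.zero)

lemma zero_negI: "0 \<in> negI \<sigma> H m"
  by (cases m) (auto intro: ideal_mult.zero)

lemma zero_Iseq: "0 \<in> Iseq \<sigma> H J n"
  by (simp add: Iseq_def zero_posI zero_negI)

lemma supp_single: "supp (single n c) \<subseteq> {n}"
  by (auto simp: supp_def single_def)

lemma single_in_B: "c \<in> Iseq \<sigma> H J n \<Longrightarrow> single n c \<in> BR_alg \<sigma> H J"
  unfolding BR_alg_def using supp_single[of n c] zero_Iseq
  by (auto simp: single_def intro: finite_subset)

lemma single0_in_B: "single 0 r \<in> BR_alg \<sigma> H J"
  by (rule single_in_B) (simp add: Iseq_def)

lemma skmult_single0_left: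
  "skmult \<sigma> (single 0 s) g = (\<lambda>k. s * g k)"
proof (cases "s = 0")
  case True
  then have "supp (single 0 s) = {}" by (auto simp: supp_def single_def)
  then show ?thesis using True by (simp add: skmult_def)
next
  case False
  then have "supp (single 0 s) = {0}" by (auto simp: supp_def single_def)
  then show ?thesis by (simp add: skmult_def zpow_0 single_def)
qed

lemma skmult_single0_right:
  assumes "finite (supp x)" and z: "\<And>m. zpow \<sigma> m 0 = 0"
  shows "skmult \<sigma> x (single 0 r) = (\<lambda>k. x k * zpow \<sigma> k r)"
proof
  fix k
  have "skmult \<sigma> x (single 0 r) k = (\<Sum>m\<in>supp x. if m = k then x k * zpow \<sigma> k r else 0)"
    unfolding skmult_def by (rule sum.cong) (auto simp: single_def z)
  also have "\<dots> = x k * zpow \<sigma> k r"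
    using assms(1) by (simp add: supp_def)
  finally show "skmult \<sigma> x (single 0 r) k = x k * zpow \<sigma> k r" .
qed

lemma Q_univ:
  fixes \<sigma> :: "'a::comm_ring_1 \<Rightarrow> 'a"
  assumes N: "noetherian TYPE('a)" and b: "bij \<sigma>"
    and hyp: "\<forall>P n. maximal_ideal P \<and> n \<noteq> 0 \<longrightarrow> zpow \<sigma> n ` P \<noteq> P"
    and Q: "is_ideal Q" and ab: "a \<noteq> c" and r: "\<forall>r. zpow \<sigma> c r - zpow \<sigma> a r \<in> Q"
  shows "Q = UNIV"
proof (rule ccontr)
  assume "Q \<noteq> UNIV"
  then obtain P where P: "maximal_ideal P" "Q \<subseteq> P" using exists_maximal[OF N Q] by blast
  have PI: "is_ideal P" using P unfolding maximal_ideal_def by blast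
  define d where "d = c - a"
  have d0: "d \<noteq> 0" using ab by (simp add: d_def)
  have du: "zpow \<sigma> d u - u \<in> P" for u
  proof -
    have "zpow \<sigma> c (zpow \<sigma> (-a) u) = zpow \<sigma> d u"
      using zpow_add[OF b, of c "-a" u] by (simp add: d_def)
    moreover have "zpow \<sigma> a (zpow \<sigma> (-a) u) = u"
      using zpow_add[OF b, of a "-a" u] by (simp add: zpow_0)
    ultimately show ?thesis using r P(2) by (metis subsetD)
  qed
  have "zpow \<sigma> d ` P = P"
  proof
    show "zpow \<sigma> d ` P \<subseteq> P"
    proof
      fix y assume "y \<in> zpow \<sigma> d ` P"
      then obtain p where p: "p \<in> P" "y = zpow \<sigma> d p" by blast
      have "(zpow \<sigma> d p - p) + p \<in> P" using PI du p(1) unfolding is_ideal_def by blast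
      then show "y \<in> P" using p by simp
    qed
  next
    show "P \<subseteq> zpow \<sigma> d ` P"
    proof
      fix p assume p: "p \<in> P"
      define q where "q = zpow \<sigma> (-d) p"
      have e: "zpow \<sigma> d q = p" using zpow_add[OF b, of d "-d" p] by (simp add: zpow_0 q_def)
      have "p - (zpow \<sigma> d q - q) \<in> P" using PI du p unfolding is_ideal_def by blast
      then have "q \<in> P" using e by simp
      then show "p \<in> zpow \<sigma> d ` P" using e by force
    qed
  qed
  then show False using hyp P(1) d0 by blast
qed

lemma single_zero: "single n 0 = (\<lambda>_. 0)"
  by (simp add: single_def)

lemma components:
  fixes \<sigma> :: "'a::comm_ring_1 \<Rightarrow> 'a"
  assumes I: "two_sided_ideal \<sigma> (BR_alg \<sigma> H J) I"
    and z: "\<And>m. zpow \<sigma> m 0 = 0"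
    and QU: "\<And>Q a c. is_ideal Q \<Longrightarrow> a \<noteq> c \<Longrightarrow> (\<forall>r. zpow \<sigma> c r - zpow \<sigma> a r \<in> Q) \<Longrightarrow> Q = UNIV"
  shows "x \<in> I \<Longrightarrow> single n (x n) \<in> I"
proof (induction "card (supp x)" arbitrary: x n rule: less_induct)
  case less
  have IB: "I \<subseteq> BR_alg \<sigma> H J" and I0: "(\<lambda>_. 0) \<in> I"
    and Iadd: "\<And>x y. x \<in> I \<Longrightarrow> y \<in> I \<Longrightarrow> (\<lambda>n. x n + y n) \<in> I \<and> (\<lambda>n. x n - y n) \<in> I"
    and Imul: "\<And>b x. b \<in> BR_alg \<sigma> H J \<Longrightarrow> x \<in> I \<Longrightarrow> skmult \<sigma> b x \<in> I \<and> skmult \<sigma> x b \<in> I"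
    using I unfolding two_sided_ideal_def by blast+
  have fin: "finite (supp x)" using less.prems IB unfolding BR_alg_def by blast
  show ?case
  proof (cases "n \<in> supp x")
    case False
    then have "x n = 0" by (simp add: supp_def)
    then show ?thesis using I0 by (simp add: single_zero)
  next
    case nin: True
    show ?thesis
    proof (cases "supp x = {n}")
      case True
      have "single n (x n) = x"
      proof
        fix k show "single n (x n) k = x k"
          using True by (cases "k = n") (auto simp: single_def supp_def)
      qed
      then show ?thesis using less.prems by simp
    next
      case False
      then obtain a where a: "a \<in> supp x" "a \<noteq> n" using nin by blast
      have comp: "single n (x n * (zpow \<sigma> n r - zpow \<sigma> a r)) \<in> I" for r
      proof -
        define y where "y = (\<lambda>k. x k * (zpow \<sigma> k r - zpow \<sigma> a r))"
        have m1: "skmult \<sigma> x (single 0 r) \<in> I" using Imul[OF single0_in_B less.prems] by blast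
        have m2: "skmult \<sigma> (single 0 (zpow \<sigma> a r)) x \<in> I" using Imul[OF single0_in_B less.prems] by blast
        have "(\<lambda>k. skmult \<sigma> x (single 0 r) k - skmult \<sigma> (single 0 (zpow \<sigma> a r)) x k) \<in> I"
          using Iadd[OF m1 m2] by blast
        moreover have "(\<lambda>k. skmult \<sigma> x (single 0 r) k - skmult \<sigma> (single 0 (zpow \<sigma> a r)) x k) = y"
          unfolding y_def skmult_single0_right[OF fin z] skmult_single0_left
          by (simp add: algebra_simps)
        ultimately have yI: "y \<in> I" by simp
        have "supp y \<subseteq> supp x - {a}" by (auto simp: supp_def y_def)
        then have "supp y \<subset> supp x" using a(1) by blast
        then have "card (supp y) < card (supp x)" by (rule psubset_card_mono[OF fin])
        then have "single n (y n) \<in> I" using less.hyps yI by blast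
        then show ?thesis by (simp add: y_def)
      qed
      define Q where "Q = {c. single n (c * x n) \<in> I}"
      have sadd: "single n ((c + d) * x n) = (\<lambda>k. single n (c * x n) k + single n (d * x n) k)"
        and sdiff: "single n ((c - d) * x n) = (\<lambda>k. single n (c * x n) k - single n (d * x n) k)"
        for c d by (auto simp: single_def algebra_simps)
      have smul: "single n ((r * c) * x n) = skmult \<sigma> (single 0 r) (single n (c * x n))" for r c
        unfolding skmult_single0_left by (auto simp: single_def)
      have "is_ideal Q"
        unfolding is_ideal_def
      proof (intro conjI ballI allI impI)
        show "0 \<in> Q" using I0 by (simp add: Q_def single_zero)
      next
        fix c d assume "c \<in> Q" "d \<in> Q"
        then show "c + d \<in> Q" "c - d \<in> Q" using Iadd unfolding Q_def by (auto simp: sadd sdiff)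
      next
        fix r c assume "c \<in> Q"
        then show "r * c \<in> Q" using Imul[OF single0_in_B] unfolding Q_def by (simp add: smul)
      qed
      moreover have "\<forall>r. zpow \<sigma> n r - zpow \<sigma> a r \<in> Q"
        using comp unfolding Q_def by (simp add: mult.commute)
      ultimately have "Q = UNIV" using QU a(2) by blast
      then have "1 \<in> Q" by simp
      then show ?thesis by (simp add: Q_def)
    qed
  qed
qed

theorem proposition2p2:
  fixes emb :: "'k::field \<Rightarrow> 'a::idom"
    and \<sigma> :: "'a \<Rightarrow> 'a"
    and H J :: "'a set"
  assumes "ring_hom_fun emb"
    and "noetherian TYPE('a)"
    and "k_alg_aut emb \<sigma>"
    and "is_ideal H" and "is_ideal J"
    and "\<forall>n. Iseq \<sigma> H J n \<noteq> {0}"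
    and "\<forall>P n. maximal_ideal P \<and> n \<noteq> 0 \<longrightarrow> zpow \<sigma> n ` P \<noteq> P"
  shows "\<forall>I. two_sided_ideal \<sigma> (BR_alg \<sigma> H J) I \<longrightarrow> graded_ideal \<sigma> (BR_alg \<sigma> H J) I"
proof (intro allI impI)
  fix I assume I: "two_sided_ideal \<sigma> (BR_alg \<sigma> H J) I"
  have b: "bij \<sigma>" and hom: "ring_hom_fun \<sigma>" using assms(3) by (auto simp: k_alg_aut_def)
  have s0: "\<sigma> 0 = 0"
  proof -
    have "\<sigma> (0 + 0) = \<sigma> 0 + \<sigma> 0" using hom unfolding ring_hom_fun_def by blast
    then have "\<sigma> 0 + 0 = \<sigma> 0 + \<sigma> 0" by simp
    then show ?thesis by (rule add_left_imp_eq[symmetric])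
  qed
  have z: "zpow \<sigma> m 0 = 0" for m by (rule zpow_zero[OF b s0])
  have QU: "Q = UNIV" if "is_ideal Q" "a \<noteq> c" "\<forall>r. zpow \<sigma> c r - zpow \<sigma> a r \<in> Q" for Q a c
    by (rule Q_univ[OF assms(2) b assms(7) that])
  have comp: "single n (x n) \<in> I" if "x \<in> I" for x n
    by (rule components[OF I z QU that])
  define G where "G = {f \<in> I. homogeneous f}"
  have hom_single: "homogeneous (single n c)" for n c
    unfolding homogeneous_def using supp_single by blast
  show "graded_ideal \<sigma> (BR_alg \<sigma> H J) I"
    unfolding graded_ideal_def gen_two_sided_ideal_def
  proof
    show "I \<subseteq> \<Inter>{I2. two_sided_ideal \<sigma> (BR_alg \<sigma> H J) I2 \<and> {f \<in> I. homogeneous f} \<subseteq> I2}"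
    proof (rule Inter_greatest)
      fix I2 assume "I2 \<in> {I2. two_sided_ideal \<sigma> (BR_alg \<sigma> H J) I2 \<and> {f \<in> I. homogeneous f} \<subseteq> I2}"
      then have I2: "two_sided_ideal \<sigma> (BR_alg \<sigma> H J) I2" and sub: "{f \<in> I. homogeneous f} \<subseteq> I2"
        by auto
      have I20: "(\<lambda>_. 0) \<in> I2"
        and I2add: "\<And>x y. x \<in> I2 \<Longrightarrow> y \<in> I2 \<Longrightarrow> (\<lambda>n. x n + y n) \<in> I2"
        using I2 unfolding two_sided_ideal_def by blast+
      show "I \<subseteq> I2"
      proof
        fix x assume xI: "x \<in> I"
        have fin: "finite (supp x)" using xI I unfolding two_sided_ideal_def BR_alg_def by blast
        have sI2: "single n (x n) \<in> I2" for n using comp[OF xI] hom_single sub by blast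
        have "finite F \<Longrightarrow> F \<subseteq> supp x \<Longrightarrow> (\<lambda>k. if k \<in> F then x k else 0) \<in> I2" for F
        proof (induction F rule: finite_induct)
          case empty
          then show ?case using I20 by simp
        next
          case (insert n F)
          have e: "(\<lambda>k. if k \<in> insert n F then x k else 0)
              = (\<lambda>k. (if k \<in> F then x k else 0) + single n (x n) k)"
            using insert(2) by (auto simp: single_def)
          show ?case unfolding e using I2add insert sI2 by blast
        qed
        from this[OF fin] have "(\<lambda>k. if k \<in> supp x then x k else 0) \<in> I2" by simp
        moreover have "(\<lambda>k. if k \<in> supp x then x k else 0) = x" by (auto simp: supp_def)
        ultimately show "x \<in> I2" by simp
      qed
    qed
  next
    show "\<Inter>{I2. two_sided_ideal \<sigma> (BR_alg \<sigma> H J) I2 \<and> {f \<in> I. homogeneous f} \<subseteq> I2} \<subseteq> I"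
      using I by blast
  qed
qed

end
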